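(* Let $A$ be a unital C*-algebra such that $\mathcal C(A)$ satisfies the ascending chain condition: every chain $C_1\subseteq C_2\subseteq C_3\subseteq\cdots$ in $\mathcal C(A)$ stabilizes. Then the topological space $\Sigma_\ast$ is sober (every nonempty irreducible closed subset is the closure of a unique point). In particular, $\Sigma_\ast$ is sober whenever $A$ is finite-dimensional.
   Context: Let $A$ be a unital C*-algebra. $\mathcal C(A)$ is the poset (under inclusion) of commutative C*-subalgebras of $A$ containing the unit of $A$. For $C\in\mathcal C(A)$, $\Sigma_C$ is its Gelfand spectrum; for $C\subseteq C'$ and $\lambda'\in\Sigma_{C'}$, $\lambda'|_C$ is the restriction. Let $\Sigma=\{(C,\lambda)\mid C\in\mathcal C(A),\lambda\in\Sigma_C\}$ and $U_C=\{\lambda\mid(C,\lambda)\in U\}$ for $U\subseteq\Sigma$. The space $\Sigma_\ast$ is $\Sigma$ with the topology in which $U$ is open iff (1) each $U_C$ is open in $\Sigma_C$, and (2) if $\lambda\in U_C$, $C\subseteq C'$ and $\lambda'\in\Sigma_{C'}$ with $\lambda'|_C=\lambda$, then $\lambda'\in U_{C'}$. *)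

theory Defs
  imports "HOL-Analysis.Analysis"
begin

class cstar_algebra = banach + real_normed_algebra_1 +
  fixes scaleC :: "complex \<Rightarrow> 'a \<Rightarrow> 'a"
    and adj :: "'a \<Rightarrow> 'a"
  assumes scaleC_of_real: "scaleC (of_real r) x = scaleR r x"
    and scaleC_add_right: "scaleC c (x + y) = scaleC c x + scaleC c y"
    and scaleC_add_left: "scaleC (c + d) x = scaleC c x + scaleC d x"
    and scaleC_scaleC: "scaleC c (scaleC d x) = scaleC (c * d) x"
    and scaleC_one: "scaleC 1 x = x"
    and norm_scaleC: "norm (scaleC c x) = cmod c * norm x"
    and mult_scaleC_left: "scaleC c x * y = scaleC c (x * y)"
    and mult_scaleC_right: "x * scaleC c y = scaleC c (x * y)"
    and adj_adj: "adj (adj x) = x"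
    and adj_add: "adj (x + y) = adj x + adj y"
    and adj_mult: "adj (x * y) = adj y * adj x"
    and adj_scaleC: "adj (scaleC c x) = scaleC (cnj c) (adj x)"
    and cstar_identity: "norm (adj x * x) = (norm x)\<^sup>2"

definition comm_csubalg :: "'a::cstar_algebra set \<Rightarrow> bool" where
  "comm_csubalg C \<longleftrightarrow>
     1 \<in> C \<and> closed C \<and>
     (\<forall>x\<in>C. \<forall>y\<in>C. x + y \<in> C \<and> x * y \<in> C \<and> x * y = y * x) \<and>
     (\<forall>c. \<forall>x\<in>C. scaleC c x \<in> C) \<and>
     (\<forall>x\<in>C. adj x \<in> C)"

text \<open>Characters are represented as functions in the product space
  PiE C (\<lambda>_. UNIV), i.e. extensional functions that are undefined
  outside C.\<close>

definition gelfand :: "'a::cstar_algebra set \<Rightarrow> ('a \<Rightarrow> complex) set" where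
  "gelfand C = {l \<in> extensional C.
      (\<forall>x\<in>C. \<forall>y\<in>C. l (x + y) = l x + l y \<and> l (x * y) = l x * l y) \<and>
      (\<forall>c. \<forall>x\<in>C. l (scaleC c x) = c * l x) \<and>
      (\<exists>x\<in>C. l x \<noteq> 0)}"

definition gelfand_top :: "'a::cstar_algebra set \<Rightarrow> ('a \<Rightarrow> complex) topology" where
  "gelfand_top C = subtopology (product_topology (\<lambda>_. euclidean) C) (gelfand C)"

definition Sigma_set :: "('a::cstar_algebra set \<times> ('a \<Rightarrow> complex)) set" where
  "Sigma_set = {(C, l). comm_csubalg C \<and> l \<in> gelfand C}"

definition slice :: "('a set \<times> ('a \<Rightarrow> complex)) set \<Rightarrow> 'a set \<Rightarrow> ('a \<Rightarrow> complex) set" where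
  "slice U C = {l. (C, l) \<in> U}"

definition Sigma_open :: "('a::cstar_algebra set \<times> ('a \<Rightarrow> complex)) set \<Rightarrow> bool" where
  "Sigma_open U \<longleftrightarrow> U \<subseteq> Sigma_set \<and>
     (\<forall>C. comm_csubalg C \<longrightarrow> openin (gelfand_top C) (slice U C)) \<and>
     (\<forall>C l C' l'. (C, l) \<in> U \<and> comm_csubalg C' \<and> C \<subseteq> C' \<and> l' \<in> gelfand C' \<and>
        restrict l' C = l \<longrightarrow> (C', l') \<in> U)"

lemma Sigma_openI:
  assumes "U \<subseteq> Sigma_set"
    and "\<And>C. comm_csubalg C \<Longrightarrow> openin (gelfand_top C) (slice U C)"
    and "\<And>C l C' l'. (C, l) \<in> U \<Longrightarrow> comm_csubalg C' \<Longrightarrow> C \<subseteq> C' \<Longrightarrow>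
           l' \<in> gelfand C' \<Longrightarrow> restrict l' C = l \<Longrightarrow> (C', l') \<in> U"
  shows "Sigma_open U"
  unfolding Sigma_open_def using assms by (intro conjI allI impI) (simp, simp, elim conjE, simp)

lemma Sigma_openD:
  assumes "Sigma_open U"
  shows "U \<subseteq> Sigma_set"
    and "comm_csubalg C \<Longrightarrow> openin (gelfand_top C) (slice U C)"
    and "(C, l) \<in> U \<Longrightarrow> comm_csubalg C' \<Longrightarrow> C \<subseteq> C' \<Longrightarrow>
           l' \<in> gelfand C' \<Longrightarrow> restrict l' C = l \<Longrightarrow> (C', l') \<in> U"
proof -
  show "U \<subseteq> Sigma_set" using assms unfolding Sigma_open_def by (elim conjE)
  show "comm_csubalg C \<Longrightarrow> openin (gelfand_top C) (slice U C)" using assms unfolding Sigma_open_def by (elim conjE) simp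
  show "(C, l) \<in> U \<Longrightarrow> comm_csubalg C' \<Longrightarrow> C \<subseteq> C' \<Longrightarrow>
           l' \<in> gelfand C' \<Longrightarrow> restrict l' C = l \<Longrightarrow> (C', l') \<in> U"
    using assms unfolding Sigma_open_def by (elim conjE) (erule allE[of _ C], erule allE[of _ l], erule allE[of _ C'], erule allE[of _ l'], simp)
qed

lemma istopology_Sigma_open: "istopology Sigma_open"
  unfolding istopology_def
proof (intro conjI allI impI)
  fix S T :: "('a::cstar_algebra set \<times> ('a \<Rightarrow> complex)) set"
  assume S: "Sigma_open S" and T: "Sigma_open T"
  have e: "slice (S \<inter> T) C = slice S C \<inter> slice T C" for C by (auto simp: slice_def)
  show "Sigma_open (S \<inter> T)"
  proof (rule Sigma_openI)
    show "S \<inter> T \<subseteq> Sigma_set" using Sigma_openD(1)[OF S] by blast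
    show "openin (gelfand_top C) (slice (S \<inter> T) C)" if "comm_csubalg C" for C
      unfolding e by (rule openin_Int[OF Sigma_openD(2)[OF S that] Sigma_openD(2)[OF T that]])
    show "(C', l') \<in> S \<inter> T" if "(C, l) \<in> S \<inter> T" "comm_csubalg C'" "C \<subseteq> C'"
       "l' \<in> gelfand C'" "restrict l' C = l" for C l C' l'
      using Sigma_openD(3)[OF S IntD1[OF that(1)] that(2-5)] Sigma_openD(3)[OF T IntD2[OF that(1)] that(2-5)] by (rule IntI)
  qed
next
  fix K :: "('a::cstar_algebra set \<times> ('a \<Rightarrow> complex)) set set"
  assume K: "\<forall>U\<in>K. Sigma_open U"
  have e: "slice (\<Union>K) C = \<Union>((\<lambda>U. slice U C) ` K)" for C by (auto simp: slice_def)
  show "Sigma_open (\<Union>K)"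
  proof (rule Sigma_openI)
    show "\<Union>K \<subseteq> Sigma_set" using K Sigma_openD(1) by blast
    show "openin (gelfand_top C) (slice (\<Union>K) C)" if "comm_csubalg C" for C
      unfolding e using K Sigma_openD(2)[OF _ that] by (intro openin_Union) blast
    show "(C', l') \<in> \<Union>K" if "(C, l) \<in> \<Union>K" "comm_csubalg C'" "C \<subseteq> C'"
       "l' \<in> gelfand C'" "restrict l' C = l" for C l C' l'
    proof -
      from that(1) obtain U where U: "U \<in> K" "(C, l) \<in> U" by blast
      have "(C', l') \<in> U" using K U(1) by (intro Sigma_openD(3)[OF _ U(2) that(2-5)]) simp
      with U(1) show ?thesis by blast
    qed
  qed
qed

definition Sigma_star :: "('a::cstar_algebra set \<times> ('a \<Rightarrow> complex)) topology" where
  "Sigma_star = topology Sigma_open"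

lemma openin_Sigma_star: "openin Sigma_star U \<longleftrightarrow> Sigma_open U"
  by (simp add: Sigma_star_def istopology_Sigma_open)

definition irreducible_in :: "'b topology \<Rightarrow> 'b set \<Rightarrow> bool" where
  "irreducible_in T S \<longleftrightarrow> S \<noteq> {} \<and> S \<subseteq> topspace T \<and>
     (\<forall>F G. closedin T F \<and> closedin T G \<and> S \<subseteq> F \<union> G \<longrightarrow> S \<subseteq> F \<or> S \<subseteq> G)"

definition sober :: "'b topology \<Rightarrow> bool" where
  "sober T \<longleftrightarrow> (\<forall>S. closedin T S \<and> irreducible_in T S \<longrightarrow>
     (\<exists>!x. x \<in> topspace T \<and> S = T closure_of {x}))"

definition ACC_CA :: "'a::cstar_algebra itself \<Rightarrow> bool" where
  "ACC_CA _ \<longleftrightarrow> (\<forall>f :: nat \<Rightarrow> 'a set.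
     (\<forall>n. comm_csubalg (f n) \<and> f n \<subseteq> f (Suc n)) \<longrightarrow> (\<exists>N. \<forall>n\<ge>N. f n = f N))"

definition finite_dim_cstar :: "'a::cstar_algebra itself \<Rightarrow> bool" where
  "finite_dim_cstar _ \<longleftrightarrow> (\<exists>B :: 'a set. finite B \<and>
     (\<forall>x. \<exists>c. x = (\<Sum>b\<in>B. scaleC (c b) b)))"

end

theory Submission
  imports Defs
begin

lemma gelfand_sub_PiE: "gelfand C \<subseteq> (\<Pi>\<^sub>E i\<in>C. UNIV)"
  by (auto simp: gelfand_def PiE_def)

lemma topspace_gelfand_top: "topspace (gelfand_top C) = gelfand C"
  unfolding gelfand_top_def using gelfand_sub_PiE by auto

lemma openin_gelfand_all: "openin (gelfand_top C) (gelfand C)"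
  unfolding gelfand_top_def using gelfand_sub_PiE by (simp add: openin_subtopology_refl)

lemma openin_gelfand_eval:
  assumes "x \<in> D" "open Ob"
  shows "openin (gelfand_top D) {l \<in> gelfand D. l x \<in> Ob}"
proof -
  have "openin (product_topology (\<lambda>_. euclidean) D)
     {l \<in> topspace (product_topology (\<lambda>_. euclidean) D). l x \<in> Ob}"
    by (rule openin_continuous_map_preimage[OF continuous_map_product_projection[OF assms(1)]])
       (use assms in auto)
  moreover have "{l \<in> gelfand D. l x \<in> Ob} =
     {l \<in> topspace (product_topology (\<lambda>_. euclidean) D). l x \<in> Ob} \<inter> gelfand D"
    using gelfand_sub_PiE by auto
  ultimately show ?thesis unfolding gelfand_top_def openin_subtopology by blast
qed

lemma topspace_Sigma_star: "topspace Sigma_star = Sigma_set"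
proof -
  have "Sigma_open Sigma_set"
  proof (rule Sigma_openI)
    fix C assume "comm_csubalg C"
    then have "slice Sigma_set C = gelfand C" by (auto simp: slice_def Sigma_set_def)
    then show "openin (gelfand_top C) (slice Sigma_set C)" using openin_gelfand_all by simp
  qed (auto simp: Sigma_set_def)
  then show ?thesis
    using openin_Sigma_star[of Sigma_set] Sigma_openD(1)[of "topspace Sigma_star"]
      openin_subset[of Sigma_star Sigma_set] openin_topspace[of Sigma_star]
      openin_Sigma_star[of "topspace Sigma_star"]
    by blast
qed

definition Up :: "'a::cstar_algebra set \<Rightarrow> ('a set \<times> ('a \<Rightarrow> complex)) set" where
  "Up C = {(D, l) \<in> Sigma_set. C \<subseteq> D}"

definition Wev :: "'a::cstar_algebra set \<Rightarrow> 'a \<Rightarrow> complex set \<Rightarrow> ('a set \<times> ('a \<Rightarrow> complex)) set" where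
  "Wev C x Ob = {(D, l) \<in> Sigma_set. C \<subseteq> D \<and> l x \<in> Ob}"

lemma open_Up: "openin Sigma_star (Up C)"
  unfolding openin_Sigma_star
proof (rule Sigma_openI)
  fix D :: "'a set" assume D: "comm_csubalg D"
  show "openin (gelfand_top D) (slice (Up C) D)"
  proof (cases "C \<subseteq> D")
    case True
    then have "slice (Up C) D = gelfand D" using D by (auto simp: slice_def Up_def Sigma_set_def)
    then show ?thesis using openin_gelfand_all by simp
  next
    case False
    then have "slice (Up C) D = {}" by (auto simp: slice_def Up_def)
    then show ?thesis by simp
  qed
qed (auto simp: Up_def Sigma_set_def)

lemma open_Wev:
  assumes "x \<in> C" "open Ob"
  shows "openin Sigma_star (Wev C x Ob)"
  unfolding openin_Sigma_star
proof (rule Sigma_openI)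
  fix D :: "'a set" assume D: "comm_csubalg D"
  show "openin (gelfand_top D) (slice (Wev C x Ob) D)"
  proof (cases "C \<subseteq> D")
    case True
    then have "slice (Wev C x Ob) D = {l \<in> gelfand D. l x \<in> Ob}" using D
      by (auto simp: slice_def Wev_def Sigma_set_def)
    then show ?thesis using openin_gelfand_eval[of x D Ob] True assms by auto
  next
    case False
    then have "slice (Wev C x Ob) D = {}" by (auto simp: slice_def Wev_def)
    then show ?thesis by simp
  qed
next
  fix C1 l C' l'
  assume "(C1, l) \<in> Wev C x Ob" "comm_csubalg C'" "C1 \<subseteq> C'" "l' \<in> gelfand C'" "restrict l' C1 = l"
  then show "(C', l') \<in> Wev C x Ob" using assms(1)
    by (auto simp: Wev_def Sigma_set_def restrict_def split: if_splits)
qed (auto simp: Wev_def Sigma_set_def)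

lemma irr_meet:
  assumes "irreducible_in Sigma_star S" "openin Sigma_star U" "openin Sigma_star V"
    "S \<inter> U \<noteq> {}" "S \<inter> V \<noteq> {}"
  shows "S \<inter> U \<inter> V \<noteq> {}"
proof
  assume e: "S \<inter> U \<inter> V = {}"
  let ?F = "topspace Sigma_star - U" and ?G = "topspace Sigma_star - V"
  have "closedin Sigma_star ?F" "closedin Sigma_star ?G" using assms(2,3) by auto
  moreover have "S \<subseteq> ?F \<union> ?G" using e assms(1) unfolding irreducible_in_def by blast
  ultimately have "S \<subseteq> ?F \<or> S \<subseteq> ?G" using assms(1) unfolding irreducible_in_def by blast
  then show False using assms(4,5) by blast
qed

lemma gelfand_sep:
  assumes "l1 \<in> gelfand C" "l2 \<in> gelfand C" "l1 \<noteq> l2"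
  obtains x where "x \<in> C" "l1 x \<noteq> l2 x"
proof -
  have "l1 \<in> extensional C" "l2 \<in> extensional C" using assms by (auto simp: gelfand_def)
  then show ?thesis using assms(3) that by (metis extensionalityI)
qed

lemma acc_max:
  assumes acc: "ACC_CA TYPE('a::cstar_algebra)" and ne: "C0 \<in> \<D>"
    and cs: "\<And>C. C \<in> \<D> \<Longrightarrow> comm_csubalg (C :: 'a set)"
  shows "\<exists>M\<in>\<D>. \<forall>C\<in>\<D>. M \<subseteq> C \<longrightarrow> C = M"
proof (rule ccontr)
  assume "\<not> ?thesis"
  then have st: "\<forall>M\<in>\<D>. \<exists>C. C \<in> \<D> \<and> M \<subseteq> C \<and> C \<noteq> M" by blast
  define g where "g M = (SOME C. C \<in> \<D> \<and> M \<subseteq> C \<and> C \<noteq> M)" for M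
  have g: "g M \<in> \<D> \<and> M \<subseteq> g M \<and> g M \<noteq> M" if "M \<in> \<D>" for M
    unfolding g_def using st[rule_format, OF that] by (rule someI_ex)
  define f where "f n = (g ^^ n) C0" for n
  have fS: "f (Suc n) = g (f n)" for n by (simp add: f_def)
  have f0: "f 0 = C0" by (simp add: f_def)
  have fD: "f n \<in> \<D>" for n
  proof (induction n)
    case 0 then show ?case using f0 ne by simp
  next
    case (Suc n) then show ?case unfolding fS using g[of "f n"] by blast
  qed
  have ch: "\<forall>n. comm_csubalg (f n) \<and> f n \<subseteq> f (Suc n)"
  proof
    fix n show "comm_csubalg (f n) \<and> f n \<subseteq> f (Suc n)"
      using cs[OF fD[of n]] g[OF fD[of n]] unfolding fS by blast
  qed
  have "\<exists>N. \<forall>n\<ge>N. f n = f N"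
    using spec[OF acc[unfolded ACC_CA_def], of f] ch by (rule mp)
  then obtain N where N: "\<forall>n\<ge>N. f n = f N" ..
  have "f (Suc N) = f N" using N[rule_format, of "Suc N"] by linarith
  moreover have "f (Suc N) \<noteq> f N" using g[OF fD[of N]] fS[of N] by (simp del: f_def)
  ultimately show False by (rule notE[rotated])
qed


lemma closure_pt:
  assumes "a \<in> Sigma_star closure_of {b}" "openin Sigma_star T" "a \<in> T"
  shows "b \<in> T"
  using assms unfolding in_closure_of by blast

lemma T0_Sigma:
  assumes ab: "a \<in> Sigma_star closure_of {b}" and ba: "b \<in> Sigma_star closure_of {a}"
  shows "a = b"
proof -
  obtain C l where a: "a = (C, l)" by (cases a)
  obtain D m where b: "b = (D, m)" by (cases b)
  have aS: "a \<in> Sigma_set" using ab unfolding in_closure_of topspace_Sigma_star by blast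
  have bS: "b \<in> Sigma_set" using ba unfolding in_closure_of topspace_Sigma_star by blast
  have "b \<in> Up C" using closure_pt[OF ab open_Up] aS a by (auto simp: Up_def)
  then have CD: "C \<subseteq> D" using b by (auto simp: Up_def)
  have "a \<in> Up D" using closure_pt[OF ba open_Up] bS b by (auto simp: Up_def)
  then have DC: "D \<subseteq> C" using a by (auto simp: Up_def)
  have CeD: "C = D" using CD DC by blast
  have lg: "l \<in> gelfand C" and mg: "m \<in> gelfand C" using aS bS a b CeD by (auto simp: Sigma_set_def)
  have "l = m"
  proof (rule ccontr)
    assume "l \<noteq> m"
    then obtain x where x: "x \<in> C" "l x \<noteq> m x" using gelfand_sep[OF lg mg] by blast
    let ?T = "Wev C x (ball (l x) (dist (l x) (m x)))"
    have "a \<in> ?T" using aS a x by (auto simp: Wev_def)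
    then have "b \<in> ?T" by (rule closure_pt[OF ab open_Wev[OF x(1)], rotated]) simp
    then show False using b by (auto simp: Wev_def dist_commute)
  qed
  then show ?thesis using a b CeD by simp
qed

lemma sober_of_ACC:
  assumes acc: "ACC_CA TYPE('a::cstar_algebra)"
  shows "sober (Sigma_star :: ('a set \<times> ('a \<Rightarrow> complex)) topology)"
  unfolding sober_def
proof (intro allI impI)
  fix S :: "('a set \<times> ('a \<Rightarrow> complex)) set"
  assume "closedin Sigma_star S \<and> irreducible_in Sigma_star S"
  then have cl: "closedin Sigma_star S" and irr: "irreducible_in Sigma_star S" by auto
  have SS: "S \<subseteq> Sigma_set" using closedin_subset[OF cl] unfolding topspace_Sigma_star .
  obtain p where p: "p \<in> S" using irr unfolding irreducible_in_def by blast
  define DD where "DD = {C. \<exists>l. (C, l) \<in> S}"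
  have pD: "fst p \<in> DD" using p by (cases p) (auto simp: DD_def)
  have csD: "comm_csubalg C" if "C \<in> DD" for C using that SS by (auto simp: DD_def Sigma_set_def)
  obtain M where M: "M \<in> DD" and Mmax: "\<forall>C\<in>DD. M \<subseteq> C \<longrightarrow> C = M"
    using acc_max[OF acc pD csD] by blast
  obtain lam where lam: "(M, lam) \<in> S" using M by (auto simp: DD_def)
  have lamS: "(M, lam) \<in> Sigma_set" using lam SS by blast
  then have lamg: "lam \<in> gelfand M" by (auto simp: Sigma_set_def)
  have uniq: "l = lam" if lS: "(M, l) \<in> S" for l
  proof (rule ccontr)
    assume ne: "l \<noteq> lam"
    have lSS: "(M, l) \<in> Sigma_set" using lS SS by blast
    then have lg: "l \<in> gelfand M" by (auto simp: Sigma_set_def)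
    obtain x where x: "x \<in> M" "l x \<noteq> lam x" using gelfand_sep[OF lg lamg ne] by blast
    define r where "r = dist (l x) (lam x) / 2"
    have r: "r > 0" using x by (simp add: r_def)
    have "S \<inter> Wev M x (ball (l x) r) \<inter> Wev M x (ball (lam x) r) \<noteq> {}"
    proof (rule irr_meet[OF irr open_Wev[OF x(1)] open_Wev[OF x(1)]])
      show "S \<inter> Wev M x (ball (l x) r) \<noteq> {}" using lS lSS r by (auto simp: Wev_def)
      show "S \<inter> Wev M x (ball (lam x) r) \<noteq> {}" using lam lamS r by (auto simp: Wev_def)
    qed auto
    then obtain E nu where E: "nu x \<in> ball (l x) r" "nu x \<in> ball (lam x) r"
      by (auto simp: Wev_def)
    have "dist (l x) (lam x) \<le> dist (l x) (nu x) + dist (nu x) (lam x)" by (rule dist_triangle)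
    then show False using E by (simp add: r_def dist_commute)
  qed
  have Seq: "S = Sigma_star closure_of {(M, lam)}"
  proof
    show "Sigma_star closure_of {(M, lam)} \<subseteq> S" using lam cl by (intro closure_of_minimal) auto
    show "S \<subseteq> Sigma_star closure_of {(M, lam)}"
    proof
      fix q assume q: "q \<in> S"
      show "q \<in> Sigma_star closure_of {(M, lam)}"
        unfolding in_closure_of
      proof (intro conjI allI impI)
        show "q \<in> topspace Sigma_star" using q SS topspace_Sigma_star by blast
        fix T assume T: "q \<in> T \<and> openin Sigma_star T"
        have "S \<inter> T \<inter> Up M \<noteq> {}"
          by (rule irr_meet[OF irr _ open_Up]) (use T q lam lamS in \<open>auto simp: Up_def\<close>)
        then obtain E nu where E: "(E, nu) \<in> S" "(E, nu) \<in> T" "M \<subseteq> E" by (auto simp: Up_def)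
        have "E \<in> DD" using E by (auto simp: DD_def)
        then have "E = M" using Mmax E by blast
        then have "nu = lam" using uniq E by blast
        then show "\<exists>y. y \<in> {(M, lam)} \<and> y \<in> T" using E \<open>E = M\<close> by blast
      qed
    qed
  qed
  show "\<exists>!x. x \<in> topspace Sigma_star \<and> S = Sigma_star closure_of {x}"
  proof (rule ex1I[of _ "(M, lam)"])
    show "(M, lam) \<in> topspace Sigma_star \<and> S = Sigma_star closure_of {(M, lam)}"
      using lamS Seq by (simp add: topspace_Sigma_star)
    fix y assume y: "y \<in> topspace Sigma_star \<and> S = Sigma_star closure_of {y}"
    have yy: "y \<in> Sigma_star closure_of {y}" using y closure_of_subset[of "{y}" Sigma_star] by blast
    show "y = (M, lam)"
      by (rule T0_Sigma) (use y yy lam Seq in auto)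
  qed
qed


lemma fd_ACC:
  assumes fdim: "finite_dim_cstar TYPE('a::cstar_algebra)"
  shows "ACC_CA TYPE('a)"
proof -
  interpret vs: vector_space "scaleC :: complex \<Rightarrow> 'a \<Rightarrow> 'a"
    by unfold_locales (simp_all add: scaleC_add_right scaleC_add_left scaleC_scaleC scaleC_one)
  obtain B0 :: "'a set" where fin: "finite B0" and sp: "\<forall>x. \<exists>c. x = (\<Sum>b\<in>B0. scaleC (c b) b)"
    using fdim unfolding finite_dim_cstar_def by blast
  have U: "UNIV \<subseteq> vs.span B0"
  proof
    fix x :: 'a
    obtain c where "x = (\<Sum>b\<in>B0. scaleC (c b) b)" using sp by blast
    also have "\<dots> \<in> vs.span B0"
      by (intro vs.span_sum vs.span_scale vs.span_base)
    finally show "x \<in> vs.span B0" .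
  qed
  obtain B where Bi: "vs.independent B" and BU: "UNIV \<subseteq> vs.span B"
    using vs.basis_exists[of UNIV] by blast
  have Bf: "finite B" using vs.independent_span_bound[OF fin Bi] U by blast
  interpret fd: finite_dimensional_vector_space "scaleC :: complex \<Rightarrow> 'a \<Rightarrow> 'a" B
    by unfold_locales (use Bf Bi BU in auto)
  show ?thesis unfolding ACC_CA_def
  proof (intro allI impI)
    fix f :: "nat \<Rightarrow> 'a set"
    assume ch: "\<forall>n. comm_csubalg (f n) \<and> f n \<subseteq> f (Suc n)"
    have sub: "vs.subspace (f n)" for n
    proof -
      have c: "comm_csubalg (f n)" using ch by blast
      have "(0::'a) = scaleC 0 1" by simp
      then have "0 \<in> f n" using c unfolding comm_csubalg_def by metis
      then show ?thesis using c unfolding comm_csubalg_def vs.subspace_def by blast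
    qed
    have mono: "f m \<subseteq> f n" if "m \<le> n" for m n
      using lift_Suc_mono_le[of f, OF _ that] ch by blast
    let ?K = "(\<lambda>n. vs.dim (f n)) ` UNIV"
    have Kfin: "finite ?K"
      by (rule finite_subset[of _ "{..fd.dimension}"]) (use fd.dim_subset_UNIV in auto)
    have "Max ?K \<in> ?K" by (rule Max_in[OF Kfin]) auto
    then obtain N where N: "vs.dim (f N) = Max ?K" by auto
    show "\<exists>N. \<forall>n\<ge>N. f n = f N"
    proof (intro exI allI impI)
      fix n assume n: "N \<le> n"
      have "vs.dim (f n) \<le> vs.dim (f N)" unfolding N by (rule Max_ge[OF Kfin]) auto
      then show "f n = f N"
        using fd.subspace_dim_equal[OF sub sub mono[OF n]] by simp
    qed
  qed
qed

theorem theorem2p25: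
  shows "(ACC_CA TYPE('a::cstar_algebra) \<longrightarrow> sober (Sigma_star :: ('a set \<times> ('a \<Rightarrow> complex)) topology))
       \<and> (finite_dim_cstar TYPE('a) \<longrightarrow> sober (Sigma_star :: ('a set \<times> ('a \<Rightarrow> complex)) topology))"
  using sober_of_ACC fd_ACC by blast

end
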